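(* Let $G$ be a finite perfect graph. Then $G$ is symmetric with respect to graph entropy (i.e., the uniform distribution on $V(G)$ maximizes $H(G,P)$ over all probability distributions $P$ on $V(G)$) if and only if $V(G)$ can be partitioned into vertex sets of pairwise disjoint cliques of $G$, each of size $\omega(G)$ (the maximum clique size of $G$).
   Context: For a finite graph $G$ with $V(G)=\{1,\dots,n\}$, the vertex packing polytope $VP(G)\subseteq\mathbb{R}^n$ is the convex hull of the characteristic vectors of the independent sets of $G$. For a probability distribution $P=(p_1,\dots,p_n)$ on $V(G)$, the graph entropy is $H(G,P)=\min_{\mathbf a\in VP(G)}\sum_{i=1}^n p_i\log(1/a_i)$. A graph is called symmetric with respect to graph entropy if the uniform distribution on its vertex set attains $\max_P H(G,P)$. *)

theory Defs
  imports "HOL-Analysis.Analysis"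
begin

text \<open>A finite simple graph: vertex set = the finite type 'a, edges given by a
symmetric irreflexive relation E.\<close>

definition simple_graph :: "('a \<Rightarrow> 'a \<Rightarrow> bool) \<Rightarrow> bool" where
  "simple_graph E \<longleftrightarrow> (\<forall>x y. E x y \<longrightarrow> E y x) \<and> (\<forall>x. \<not> E x x)"

definition independent :: "('a \<Rightarrow> 'a \<Rightarrow> bool) \<Rightarrow> 'a set \<Rightarrow> bool" where
  "independent E S \<longleftrightarrow> (\<forall>x\<in>S. \<forall>y\<in>S. \<not> E x y)"

definition clique :: "('a \<Rightarrow> 'a \<Rightarrow> bool) \<Rightarrow> 'a set \<Rightarrow> bool" where
  "clique E S \<longleftrightarrow> (\<forall>x\<in>S. \<forall>y\<in>S. x \<noteq> y \<longrightarrow> E x y)"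

definition clique_number :: "('a \<Rightarrow> 'a \<Rightarrow> bool) \<Rightarrow> 'a set \<Rightarrow> nat" where
  "clique_number E S = Max {card C | C. C \<subseteq> S \<and> clique E C}"

definition chromatic_number :: "('a \<Rightarrow> 'a \<Rightarrow> bool) \<Rightarrow> 'a set \<Rightarrow> nat" where
  "chromatic_number E S = (LEAST k. \<exists>c :: 'a \<Rightarrow> nat.
      (\<forall>x\<in>S. c x < k) \<and> (\<forall>x\<in>S. \<forall>y\<in>S. E x y \<longrightarrow> c x \<noteq> c y))"

definition perfect :: "('a \<Rightarrow> 'a \<Rightarrow> bool) \<Rightarrow> bool" where
  "perfect E \<longleftrightarrow> (\<forall>S. chromatic_number E S = clique_number E S)"

definition VP :: "('a::finite \<Rightarrow> 'a \<Rightarrow> bool) \<Rightarrow> (real ^ 'a) set" where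
  "VP E = convex hull {(\<chi> i. if i \<in> S then 1 else 0) | S. independent E S}"

definition prob_dist :: "real ^ ('a::finite) \<Rightarrow> bool" where
  "prob_dist P \<longleftrightarrow> (\<forall>i. P $ i \<ge> 0) \<and> (\<Sum>i\<in>UNIV. P $ i) = 1"

text \<open>Points a with a_i = 0 for some p_i > 0 give value +infinity and are excluded;
terms with p_i = 0 contribute 0. The minimum is attained, so Inf = min.\<close>
definition graph_entropy :: "('a::finite \<Rightarrow> 'a \<Rightarrow> bool) \<Rightarrow> real ^ 'a \<Rightarrow> real" where
  "graph_entropy E P = Inf ((\<lambda>a. \<Sum>i\<in>UNIV. P $ i * log 2 (1 / a $ i)) `
      {a \<in> VP E. \<forall>i. P $ i > 0 \<longrightarrow> a $ i > 0})"

definition uniform_dist :: "real ^ ('a::finite)" where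
  "uniform_dist = (\<chi> i. 1 / real CARD('a))"

definition entropy_symmetric :: "('a::finite \<Rightarrow> 'a \<Rightarrow> bool) \<Rightarrow> bool" where
  "entropy_symmetric E \<longleftrightarrow>
     (\<forall>P. prob_dist P \<longrightarrow> graph_entropy E P \<le> graph_entropy E uniform_dist)"

end

theory Submission
  imports Defs
begin

definition colorable :: "('b \<Rightarrow> 'b \<Rightarrow> bool) \<Rightarrow> 'b set \<Rightarrow> nat \<Rightarrow> bool" where
  "colorable E T k \<longleftrightarrow> (\<exists>c::'b\<Rightarrow>nat. (\<forall>x\<in>T. c x < k) \<and> (\<forall>x\<in>T. \<forall>y\<in>T. E x y \<longrightarrow> c x \<noteq> c y))"

definition alpha :: "('b \<Rightarrow> 'b \<Rightarrow> bool) \<Rightarrow> 'b set \<Rightarrow> nat" where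
  "alpha E T = Max {card A | A. A \<subseteq> T \<and> independent E A}"

definition perf :: "('b \<Rightarrow> 'b \<Rightarrow> bool) \<Rightarrow> 'b set \<Rightarrow> bool" where
  "perf E S \<longleftrightarrow> (\<forall>T\<subseteq>S. chromatic_number E T = clique_number E T)"

lemma chrom_def2: "chromatic_number E T = (LEAST k. colorable E T k)"
  unfolding chromatic_number_def colorable_def by simp

lemma colorable_card:
  assumes "finite T" "\<forall>x. \<not> E x x"
  shows "colorable E T (card T)"
proof -
  obtain h where h: "bij_betw h T {0..<card T}" using ex_bij_betw_finite_nat[OF assms(1)] by blast
  have "\<forall>x\<in>T. h x < card T" using h bij_betwE by fastforce
  moreover have "\<forall>x\<in>T. \<forall>y\<in>T. E x y \<longrightarrow> h x \<noteq> h y"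
    using h assms(2) unfolding bij_betw_def inj_on_def by metis
  ultimately show ?thesis unfolding colorable_def by blast
qed

lemma chrom_colorable:
  assumes "finite T" "\<forall>x. \<not> E x x"
  shows "colorable E T (chromatic_number E T)"
  unfolding chrom_def2 using colorable_card[of T E, OF assms] by (rule LeastI)

lemma chrom_le: "colorable E T k \<Longrightarrow> chromatic_number E T \<le> k"
  unfolding chrom_def2 by (rule Least_le)

lemma clique_set_finite:
  assumes "finite T"
  shows "finite {card C | C. C \<subseteq> T \<and> clique E C}" "{card C | C. C \<subseteq> T \<and> clique E C} \<noteq> {}"
proof -
  have "{card C | C. C \<subseteq> T \<and> clique E C} \<subseteq> card ` Pow T" by auto
  then show "finite {card C | C. C \<subseteq> T \<and> clique E C}" using assms
    by (meson finite_Pow_iff finite_imageI finite_subset)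
  have "clique E {}" unfolding clique_def by simp
  then show "{card C | C. C \<subseteq> T \<and> clique E C} \<noteq> {}" by blast
qed

lemma clique_number_ex:
  assumes "finite T"
  obtains C where "C \<subseteq> T" "clique E C" "card C = clique_number E T"
proof -
  have "clique_number E T \<in> {card C | C. C \<subseteq> T \<and> clique E C}"
    unfolding clique_number_def using clique_set_finite[OF assms] by (rule Max_in)
  then obtain C where "C \<subseteq> T" "clique E C" "card C = clique_number E T" by auto
  then show ?thesis using that by simp
qed

lemma clique_number_ge:
  assumes "finite T" "C \<subseteq> T" "clique E C"
  shows "card C \<le> clique_number E T"
  unfolding clique_number_def
  by (rule Max_ge[OF clique_set_finite(1)[OF assms(1)]]) (use assms(2,3) in auto)

lemma indep_set_finite:
  assumes "finite T"
  shows "finite {card A | A. A \<subseteq> T \<and> independent E A}" "{card A | A. A \<subseteq> T \<and> independent E A} \<noteq> {}"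
proof -
  have "{card C | C. C \<subseteq> T \<and> independent E C} \<subseteq> card ` Pow T" by auto
  then show "finite {card C | C. C \<subseteq> T \<and> independent E C}" using assms
    by (meson finite_Pow_iff finite_imageI finite_subset)
  have "independent E {}" unfolding independent_def by simp
  then show "{card C | C. C \<subseteq> T \<and> independent E C} \<noteq> {}" by blast
qed

lemma alpha_ex:
  assumes "finite T"
  obtains A where "A \<subseteq> T" "independent E A" "card A = alpha E T"
proof -
  have "alpha E T \<in> {card C | C. C \<subseteq> T \<and> independent E C}"
    unfolding alpha_def using indep_set_finite[OF assms] by (rule Max_in)
  then obtain C where "C \<subseteq> T" "independent E C" "card C = alpha E T" by auto
  then show ?thesis using that by simp
qed

lemma alpha_ge:
  assumes "finite T" "A \<subseteq> T" "independent E A"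
  shows "card A \<le> alpha E T"
  unfolding alpha_def
  by (rule Max_ge[OF indep_set_finite(1)[OF assms(1)]]) (use assms(2,3) in auto)

lemma clique_le_colorable:
  assumes "finite T" "C \<subseteq> T" "clique E C" "colorable E T k"
  shows "card C \<le> k"
proof -
  obtain c where c: "\<forall>x\<in>T. c x < k" "\<forall>x\<in>T. \<forall>y\<in>T. E x y \<longrightarrow> c x \<noteq> c y"
    using assms(4) unfolding colorable_def by blast
  have "inj_on c C" using c(2) assms(2,3) unfolding inj_on_def clique_def by blast
  then have "card C = card (c ` C)" by (simp add: card_image)
  also have "\<dots> \<le> card {..<k}" using c(1) assms(2) by (intro card_mono) auto
  finally show ?thesis by simp
qed

lemma clique_le_chrom:
  assumes "finite T" "\<forall>x. \<not> E x x"
  shows "clique_number E T \<le> chromatic_number E T"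
proof -
  obtain C where "C \<subseteq> T" "clique E C" "card C = clique_number E T"
    using clique_number_ex[OF assms(1)] by blast
  then show ?thesis using clique_le_colorable[OF assms(1) _ _ chrom_colorable[of T E, OF assms]] by metis
qed

lemma card_le_colors:
  assumes "finite T" "colorable E T k"
  shows "card T \<le> k * alpha E T"
proof -
  obtain c where c: "\<forall>x\<in>T. c x < k" "\<forall>x\<in>T. \<forall>y\<in>T. E x y \<longrightarrow> c x \<noteq> c y"
    using assms(2) unfolding colorable_def by blast
  have T: "T = (\<Union>j\<in>{..<k}. {x\<in>T. c x = j})" using c(1) by auto
  have "card T \<le> (\<Sum>j\<in>{..<k}. card {x\<in>T. c x = j})"
    by (subst T) (rule card_UN_le, simp)
  also have "\<dots> \<le> of_nat (card {..<k}) * alpha E T"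
  proof (rule sum_bounded_above)
    fix j assume "j \<in> {..<k}"
    have "independent E {x\<in>T. c x = j}" using c(2) unfolding independent_def by fastforce
    then show "card {x\<in>T. c x = j} \<le> alpha E T" using assms(1) by (intro alpha_ge) auto
  qed
  finally show ?thesis by simp
qed

lemma colorable_pull:
  assumes "colorable E' (f`T) k" "\<forall>x\<in>T. \<forall>y\<in>T. E' (f x) (f y) = E x y"
  shows "colorable E T k"
proof -
  obtain c where c: "\<forall>x\<in>f`T. c x < k" "\<forall>x\<in>f`T. \<forall>y\<in>f`T. E' x y \<longrightarrow> c x \<noteq> c y"
    using assms(1) unfolding colorable_def by blast
  have "\<forall>x\<in>T. (c \<circ> f) x < k" using c(1) by auto
  moreover have "\<forall>x\<in>T. \<forall>y\<in>T. E x y \<longrightarrow> (c\<circ>f) x \<noteq> (c\<circ>f) y" using c(2) assms(2) by auto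
  ultimately show ?thesis unfolding colorable_def by blast
qed

lemma transfer_le:
  assumes "finite T" "inj_on f T" "\<forall>x\<in>T. \<forall>y\<in>T. E' (f x) (f y) = E x y" "\<forall>x. \<not> E' x x"
  shows "chromatic_number E T \<le> chromatic_number E' (f`T)"
    and "clique_number E T \<le> clique_number E' (f`T)"
proof -
  have fin: "finite (f ` T)" using assms(1) by simp
  show "chromatic_number E T \<le> chromatic_number E' (f`T)"
  proof (rule chrom_le)
    show "colorable E T (chromatic_number E' (f`T))"
      using colorable_pull[OF chrom_colorable[of "f`T" E', OF fin assms(4)] assms(3)] .
  qed
  obtain C where C: "C \<subseteq> T" "clique E C" "card C = clique_number E T"
    using clique_number_ex[OF assms(1)] by blast
  have "clique E' (f`C)" using C assms(3) unfolding clique_def by (metis (no_types, lifting) imageE subsetD)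
  moreover have "card (f`C) = card C" using assms(2) C(1) by (meson card_image inj_on_subset)
  ultimately show "clique_number E T \<le> clique_number E' (f`T)"
    using clique_number_ge[OF fin, of "f`C" E'] C by auto
qed

lemma perf_hered: "perf E S \<Longrightarrow> T \<subseteq> S \<Longrightarrow> perf E T" unfolding perf_def by auto

lemma clique_number_mono:
  assumes "finite T" "T0 \<subseteq> T"
  shows "clique_number E T0 \<le> clique_number E T"
proof -
  have fin0: "finite T0" using assms(2,1) by (rule finite_subset)
  obtain C where "C \<subseteq> T0" "clique E C" "card C = clique_number E T0"
    by (rule clique_number_ex[OF fin0, of E])
  then show ?thesis using clique_number_ge[OF assms(1), of C E] assms(2) by auto
qed

lemma perf_transfer:
  assumes "finite S" "inj_on f S" "\<forall>x\<in>S. \<forall>y\<in>S. E' (f x) (f y) = E x y"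
    "\<forall>x. \<not> E x x" "\<forall>x. \<not> E' x x" "perf E S"
  shows "perf E' (f`S)"
  unfolding perf_def
proof (intro allI impI)
  fix T' assume T': "T' \<subseteq> f`S"
  define T where "T = {x\<in>S. f x \<in> T'}"
  have fT: "f`T = T'" using T' unfolding T_def by auto
  have finT: "finite T" unfolding T_def using assms(1) by simp
  have TS: "T \<subseteq> S" unfolding T_def by auto
  have injT: "inj_on f T" using assms(2) TS by (rule inj_on_subset)
  define g where "g = inv_into T f"
  have injg: "inj_on g T'" unfolding g_def using fT by (intro inj_on_inv_into) simp
  have gT: "g ` T' = T" unfolding g_def using fT injT by (metis inv_into_image_cancel order_refl)
  have rel: "\<forall>x\<in>T'. \<forall>y\<in>T'. E (g x) (g y) = E' x y"
  proof (intro ballI)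
    fix x y assume xy: "x \<in> T'" "y \<in> T'"
    have "f (g x) = x" "f (g y) = y" unfolding g_def using xy fT by (auto intro: f_inv_into_f)
    moreover have "g x \<in> T" "g y \<in> T" using xy gT by auto
    ultimately show "E (g x) (g y) = E' x y" using assms(3) TS by (metis subsetD)
  qed
  have finT': "finite T'" using fT finT by auto
  have "chromatic_number E' T' \<le> chromatic_number E (g`T')"
    using transfer_le(1)[OF finT' injg rel assms(4)] .
  also have "\<dots> = clique_number E T" using gT assms(6) TS unfolding perf_def by auto
  also have "\<dots> \<le> clique_number E' (f`T)"
    using transfer_le(2)[OF finT injT, of E' E] assms(3) assms(5) TS by (meson subsetD)
  finally have "chromatic_number E' T' \<le> clique_number E' T'" using fT by simp
  moreover have "clique_number E' T' \<le> chromatic_number E' T'"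
    using clique_le_chrom[of T' E', OF finT' assms(5)] .
  ultimately show "chromatic_number E' T' = clique_number E' T'" by simp
qed

lemma perf_intro_le:
  assumes "finite S" "\<forall>x. \<not> E x x" "\<And>T. T \<subseteq> S \<Longrightarrow> chromatic_number E T \<le> clique_number E T"
  shows "perf E S"
  unfolding perf_def
proof (intro allI impI)
  fix T assume T: "T \<subseteq> S"
  then have "finite T" using assms(1) by (rule finite_subset)
  then have "clique_number E T \<le> chromatic_number E T" using clique_le_chrom[of T E] assms(2) by blast
  then show "chromatic_number E T = clique_number E T" using assms(3)[OF T] by simp
qed

lemma dup_perf:
  assumes sg: "simple_graph E" and fin: "finite S" and v: "v \<in> S" and v': "v' \<notin> S"
    and adj: "E v v'" and tw: "\<forall>x\<in>S. x \<noteq> v \<longrightarrow> (E v' x \<longleftrightarrow> E v x)"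
    and P: "perf E S"
  shows "perf E (insert v' S)"
proof -
  have sym: "\<And>x y. E x y \<Longrightarrow> E y x" and irr: "\<forall>x. \<not> E x x"
    using sg unfolding simple_graph_def by blast+
  show ?thesis
  proof (rule perf_intro_le)
    show "finite (insert v' S)" using fin by simp
    show "\<forall>x. \<not> E x x" by fact
    fix T assume T: "T \<subseteq> insert v' S"
    have finT: "finite T" using T fin by (meson finite_insert finite_subset)
    show "chromatic_number E T \<le> clique_number E T"
    proof (cases "v' \<in> T")
      case False
      then have "T \<subseteq> S" using T by auto
      then show ?thesis using P unfolding perf_def by simp
    next
      case v'T: True
      show ?thesis
      proof (cases "v \<in> T")
        case False
        define f where "f = (\<lambda>x. if x = v' then v else if x = v then v' else x)"
        have ff: "\<And>x. f (f x) = x" unfolding f_def by auto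
        have injf: "\<And>A. inj_on f A" unfolding inj_on_def by (metis ff)
        have relT: "\<forall>x\<in>T. \<forall>y\<in>T. E (f x) (f y) = E x y"
        proof (intro ballI)
          fix x y assume xy: "x \<in> T" "y \<in> T"
          then have xS: "x \<noteq> v" "y \<noteq> v" using False by auto
          show "E (f x) (f y) = E x y"
          proof (cases "x = v'")
            case True
            then show ?thesis
            proof (cases "y = v'")
              case True then show ?thesis using \<open>x = v'\<close> irr f_def by simp
            next
              case False
              then have "y \<in> S" using xy T by auto
              then show ?thesis using tw \<open>x = v'\<close> False xS f_def by auto
            qed
          next
            case xn: False
            show ?thesis
            proof (cases "y = v'")
              case True
              have "x \<in> S" using xy T xn by auto
              then have "E v' x = E v x" using tw xS by auto
              then have "E x v' = E x v" using sym by blast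
              then show ?thesis using True xn xS unfolding f_def by simp
            next
              case False then show ?thesis using xn xS f_def by simp
            qed
          qed
        qed
        have fTS: "f ` T \<subseteq> S" using T False v unfolding f_def by auto
        have relfT: "\<forall>x\<in>f`T. \<forall>y\<in>f`T. E (f x) (f y) = E x y" using relT ff by auto
        have "chromatic_number E T \<le> chromatic_number E (f`T)"
          using transfer_le(1)[OF finT injf relT irr] .
        also have "\<dots> = clique_number E (f`T)" using P fTS unfolding perf_def by simp
        also have "\<dots> \<le> clique_number E (f`(f`T))"
          using transfer_le(2)[of "f`T" f E E] finT injf relfT irr by auto
        also have "clique_number E (f`(f`T)) = clique_number E T"
        proof -
          have "f`(f`T) = T" using ff by (simp add: image_comp comp_def)
          then show ?thesis by simp
        qed
        finally show ?thesis .
      next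
        case vT: True
        define T0 where "T0 = T - {v'}"
        have T0S: "T0 \<subseteq> S" using T unfolding T0_def by auto
        have finT0: "finite T0" using finT T0_def by simp
        have vT0: "v \<in> T0" using vT adj irr T0_def by auto
        define w where "w = clique_number E T0"
        have chrT0: "chromatic_number E T0 = w" using P T0S unfolding perf_def w_def by simp
        obtain c where c: "\<forall>x\<in>T0. c x < w" "\<forall>x\<in>T0. \<forall>y\<in>T0. E x y \<longrightarrow> c x \<noteq> c y"
          using chrom_colorable[of T0 E, OF finT0 irr] chrT0 unfolding colorable_def by auto
        have T0T: "T0 \<subseteq> T" unfolding T0_def by auto
        have wle: "w \<le> clique_number E T" unfolding w_def using clique_number_mono[OF finT T0T] .
        have v'T0: "v' \<notin> T0" unfolding T0_def by simp
        have Tins: "T = insert v' T0" using v'T unfolding T0_def by auto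
        show ?thesis
        proof (cases "\<exists>C. C \<subseteq> T0 \<and> clique E C \<and> v \<in> C \<and> card C = w")
          case True
          then obtain C where C: "C \<subseteq> T0" "clique E C" "v \<in> C" "card C = w" by blast
          have "clique E (insert v' C)"
          proof -
            have "\<forall>x\<in>C. x \<noteq> v' \<longrightarrow> E v' x"
            proof (intro ballI impI)
              fix x assume x: "x \<in> C" "x \<noteq> v'"
              show "E v' x"
              proof (cases "x = v")
                case True then show ?thesis using sym[OF adj] by simp
              next
                case False
                then have "E v x" using C x unfolding clique_def by auto
                then show ?thesis using tw False x C T0S by auto
              qed
            qed
            note hv = this
            show ?thesis unfolding clique_def
            proof (intro ballI impI)
              fix x y assume xy: "x \<in> insert v' C" "y \<in> insert v' C" "x \<noteq> y"
              show "E x y"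
              proof (cases "x = v'")
                case True then show ?thesis using xy hv by auto
              next
                case xn: False
                show ?thesis
                proof (cases "y = v'")
                  case True
                  then have "E v' x" using xy xn hv by auto
                  then show ?thesis using sym True by simp
                next
                  case False then show ?thesis using xy xn C(2) unfolding clique_def by auto
                qed
              qed
            qed
          qed
          moreover have "card (insert v' C) = w + 1"
            proof -
            have "finite C" using C(1) finT0 by (rule finite_subset)
            moreover have "v' \<notin> C" using C(1) v'T0 by auto
            ultimately show ?thesis using C(4) by simp
          qed
          ultimately have w1: "w + 1 \<le> clique_number E T"
            using clique_number_ge[OF finT, of "insert v' C" E] C(1) T0T v'T by auto
          define c' where "c' = c(v' := w)"
          have col: "colorable E T (w + 1)"
            unfolding colorable_def
          proof (intro exI[of _ c'] conjI ballI impI)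
            fix x assume "x \<in> T" then show "c' x < w + 1" using c(1) Tins c'_def v'T0 by auto
          next
            fix x y assume xy: "x \<in> T" "y \<in> T" "E x y"
            show "c' x \<noteq> c' y"
            proof (cases "x = v'")
              case True
              then have "y \<in> T0" using xy irr Tins by auto
              moreover have "y \<noteq> v'" using \<open>y \<in> T0\<close> v'T0 by auto
              ultimately have "c' y = c y" "c' x = w" "c y < w" using True c(1) c'_def by auto
              then show ?thesis by simp
            next
              case False
              then have x0: "x \<in> T0" using xy Tins by auto
              show ?thesis
              proof (cases "y = v'")
                case True
                have "x \<noteq> v'" using x0 v'T0 by auto
                then have "c' x = c x" "c' y = w" "c x < w" using True x0 c(1) c'_def by auto
                then show ?thesis by simp
              next
                case False
                then have "y \<in> T0" using xy Tins by auto
                then show ?thesis using x0 xy c(2) c'_def v'T0 by auto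
              qed
            qed
          qed
          show ?thesis using chrom_le[OF col] w1 by linarith
        next
          case False
          define T1 where "T1 = {x\<in>T0. c x \<noteq> c v \<or> x = v}"
          have T1T0: "T1 \<subseteq> T0" unfolding T1_def by auto
          have finT1: "finite T1" using T1T0 finT0 by (rule finite_subset)
          have w1: "w \<ge> 1" unfolding w_def using clique_number_ge[OF finT0, of "{v}" E] vT0
            unfolding clique_def by auto
          have om1: "clique_number E T1 < w"
          proof (rule ccontr)
            assume "\<not> clique_number E T1 < w"
            obtain C where C: "C \<subseteq> T1" "clique E C" "card C = clique_number E T1"
              using clique_number_ex[OF finT1] by blast
            have "card C \<le> w" unfolding w_def using clique_number_ge[OF finT0 _ C(2)] C(1) T1T0 by auto
            then have cw: "card C = w" using C(3) \<open>\<not> clique_number E T1 < w\<close> by simp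
            have injc: "inj_on c C" using C(1,2) T1T0 c(2) unfolding clique_def inj_on_def by blast
            have "c ` C \<subseteq> {..<w}" using C(1) T1T0 c(1) by auto
            moreover have "card (c ` C) = card {..<w}" using injc cw by (simp add: card_image)
            ultimately have "c ` C = {..<w}" by (intro card_subset_eq) auto
            moreover have "c v < w" using c(1) vT0 by auto
            ultimately have "c v \<in> c ` C" by simp
            then obtain x where "x \<in> C" "c x = c v" by (metis imageE)
            then have "x = v" using C(1) T1_def by auto
            then show False using False C T1T0 \<open>x \<in> C\<close> cw by auto
          qed
          have "chromatic_number E T1 = clique_number E T1" using P T1T0 T0S unfolding perf_def by auto
          moreover obtain d where d0: "\<forall>x\<in>T1. d x < chromatic_number E T1" and
              d2: "\<forall>x\<in>T1. \<forall>y\<in>T1. E x y \<longrightarrow> d x \<noteq> d y"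
            using chrom_colorable[of T1 E, OF finT1 irr] unfolding colorable_def by blast
          ultimately have d1: "\<forall>x\<in>T1. d x < w - 1" using om1 by auto
          note d = d1 d2
          define e where "e = (\<lambda>x. if x \<in> T1 then d x else w - 1)"
          have col: "colorable E T w"
            unfolding colorable_def
          proof (intro exI[of _ e] conjI ballI impI)
            fix x assume "x \<in> T" then show "e x < w" using d(1) w1 e_def by auto
          next
            fix x y assume xy: "x \<in> T" "y \<in> T" "E x y"
            show "e x \<noteq> e y"
            proof (cases "x \<in> T1")
              case x1: True
              show ?thesis
              proof (cases "y \<in> T1")
                case True then show ?thesis using x1 xy d(2) e_def by auto
              next
                case False
                then have "e x = d x" "e y = w - 1" "d x < w - 1" using x1 e_def d(1) by auto
                then show ?thesis by simp
              qed
            next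
              case x1: False
              show ?thesis
              proof (cases "y \<in> T1")
                case True
                then have "e y = d y" "e x = w - 1" "d y < w - 1" using x1 e_def d(1) by auto
                then show ?thesis by simp
              next
                case y1: False
                have xA: "x = v' \<or> (x \<in> T0 \<and> c x = c v \<and> x \<noteq> v)"
                  using x1 xy Tins T1_def by auto
                have yA: "y = v' \<or> (y \<in> T0 \<and> c y = c v \<and> y \<noteq> v)"
                  using y1 xy Tins T1_def by auto
                have False
                proof (cases "x = v'")
                  case True
                  then have "y \<noteq> v'" using xy irr by auto
                  then have "y \<in> T0" "c y = c v" "y \<noteq> v" using yA by auto
                  moreover have "E v y" using tw xy True \<open>y \<in> T0\<close> T0S \<open>y \<noteq> v\<close> by auto
                  ultimately show False using c(2) vT0 by metis
                next
                  case False
                  then have x0: "x \<in> T0" "c x = c v" "x \<noteq> v" using xA by auto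
                  show False
                  proof (cases "y = v'")
                    case True
                    have "E v' x" using xy True sym by blast
                    then have "E v x" using tw x0 T0S by auto
                    then show False using c(2) vT0 x0 by metis
                  next
                    case False
                    then have "y \<in> T0" "c y = c v" using yA by auto
                    then show False using c(2) x0 xy by metis
                  qed
                qed
                then show ?thesis ..
              qed
            qed
          qed
          show ?thesis using chrom_le[OF col] wle by linarith
        qed
      qed
    qed
  qed
qed

definition blow :: "'b set \<Rightarrow> ('b \<Rightarrow> nat) \<Rightarrow> ('b \<times> nat) set" where
  "blow S h = Sigma S (\<lambda>u. {..<h u})"

definition bE :: "('b \<Rightarrow> 'b \<Rightarrow> bool) \<Rightarrow> ('b \<times> nat) \<Rightarrow> ('b \<times> nat) \<Rightarrow> bool" where
  "bE E p q \<longleftrightarrow> E (fst p) (fst q) \<or> (fst p = fst q \<and> snd p \<noteq> snd q)"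

lemma bE_simple:
  assumes "simple_graph E" shows "simple_graph (bE E)"
proof -
  have sym: "\<And>x y. E x y \<Longrightarrow> E y x" and irr: "\<forall>x. \<not> E x x"
    using assms unfolding simple_graph_def by blast+
  have "\<forall>p q. bE E p q \<longrightarrow> bE E q p"
  proof (intro allI impI)
    fix p q assume "bE E p q"
    then show "bE E q p" unfolding bE_def using sym by metis
  qed
  moreover have "\<forall>p. \<not> bE E p p" unfolding bE_def using irr by simp
  ultimately show ?thesis unfolding simple_graph_def by blast
qed

lemma blow_finite: "finite S \<Longrightarrow> finite (blow S h)"
  unfolding blow_def by (rule finite_SigmaI) auto

lemma blow_perf:
  assumes sg: "simple_graph E" and fin: "finite S" and P: "perf E S"
  shows "perf (bE E) (blow S h)"
proof -
  have sym: "\<And>x y. E x y \<Longrightarrow> E y x" and irr: "\<forall>x. \<not> E x x"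
    using sg unfolding simple_graph_def by blast+
  have sgb: "simple_graph (bE E)" using bE_simple[OF sg] .
  have irrb: "\<forall>x. \<not> bE E x x" using sgb unfolding simple_graph_def by blast
  have base: "perf (bE E) (blow S (\<lambda>_. 1))"
  proof -
    have eq: "blow S (\<lambda>_. 1) = (\<lambda>u. (u, 0::nat)) ` S" unfolding blow_def by auto
    have "perf (bE E) ((\<lambda>u. (u, 0::nat)) ` S)"
    proof (rule perf_transfer[where S=S and f="\<lambda>u. (u, 0::nat)" and E'="bE E" and E=E, OF fin _ _ irr irrb P])
      show "inj_on (\<lambda>u. (u, 0::nat)) S" by (simp add: inj_on_def)
      show "\<forall>x\<in>S. \<forall>y\<in>S. bE E (x, 0) (y, 0) = E x y" unfolding bE_def by simp
    qed
    then show ?thesis using eq by simp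
  qed
  have main: "perf (bE E) (blow S g)" if "\<forall>u\<in>S. 1 \<le> g u" for g
    using that
  proof (induction "sum g S" arbitrary: g rule: less_induct)
    case less
    show ?case
    proof (cases "\<forall>u\<in>S. g u = 1")
      case True
      then have "blow S g = blow S (\<lambda>_. 1)" unfolding blow_def by auto
      then show ?thesis using base by simp
    next
      case False
      then obtain u where u: "u \<in> S" "g u \<noteq> 1" by blast
      then have gu: "g u \<ge> 2" using less.prems by fastforce
      define g' where "g' = g(u := g u - 1)"
      have g'pos: "\<forall>u\<in>S. 1 \<le> g' u" using less.prems gu unfolding g'_def by auto
      have "sum g S = g u + sum g (S - {u})" using u fin by (simp add: sum.remove)
      moreover have "sum g' S = g' u + sum g' (S - {u})" using u fin by (simp add: sum.remove)
      moreover have "sum g' (S - {u}) = sum g (S - {u})" unfolding g'_def by (rule sum.cong) auto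
      moreover have "g' u < g u" unfolding g'_def using gu by simp
      ultimately have lt: "sum g' S < sum g S" by linarith
      have Pg': "perf (bE E) (blow S g')" using less.hyps[OF lt g'pos] .
      have ins: "blow S g = insert (u, g u - 1) (blow S g')"
        unfolding blow_def g'_def using u gu by (auto split: if_splits)
      show ?thesis unfolding ins
      proof (rule dup_perf[where E="bE E" and S="blow S g'" and v="(u, 0)" and v'="(u, g u - 1)", OF sgb blow_finite[OF fin] _ _ _ _ Pg'])
        show "(u, 0) \<in> blow S g'" unfolding blow_def g'_def using u gu by auto
        show "(u, g u - 1) \<notin> blow S g'" unfolding blow_def g'_def by auto
        show "bE E (u, 0) (u, g u - 1)" unfolding bE_def using gu by auto
        show "\<forall>x\<in>blow S g'. x \<noteq> (u, 0) \<longrightarrow> bE E (u, g u - 1) x = bE E (u, 0) x"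
        proof (intro ballI impI)
          fix x assume x: "x \<in> blow S g'" "x \<noteq> (u, 0)"
          obtain a k where xak: "x = (a, k)" by fastforce
          show "bE E (u, g u - 1) x = bE E (u, 0) x"
          proof (cases "a = u")
            case True
            then have "k \<noteq> 0" "k < g u - 1" using x xak unfolding blow_def g'_def by auto
            then show ?thesis using True xak irr unfolding bE_def by auto
          next
            case False
            then show ?thesis using xak unfolding bE_def by auto
          qed
        qed
      qed
    qed
  qed
  have "blow S h \<subseteq> blow S (\<lambda>u. max 1 (h u))" unfolding blow_def by auto
  moreover have "perf (bE E) (blow S (\<lambda>u. max 1 (h u)))" by (rule main) auto
  ultimately show ?thesis using perf_hered by blast
qed

lemma double_count:
  assumes "finite X" "finite KK"
  shows "(\<Sum>v\<in>X. card {K\<in>KK. v \<in> A K}) = (\<Sum>K\<in>KK. card (A K \<inter> X))"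
proof -
  have "(\<Sum>v\<in>X. card {K\<in>KK. v \<in> A K}) = (\<Sum>v\<in>X. \<Sum>K\<in>{K. K \<in> KK \<and> v \<in> A K}. (1::nat))" by simp
  also have "\<dots> = (\<Sum>K\<in>KK. \<Sum>v\<in>{v. v \<in> X \<and> v \<in> A K}. (1::nat))"
    by (rule sum.swap_restrict) (use assms in auto)
  also have "\<dots> = (\<Sum>K\<in>KK. card (A K \<inter> X))"
  proof (rule sum.cong[OF refl])
    fix K assume "K \<in> KK"
    have "{v. v \<in> X \<and> v \<in> A K} = A K \<inter> X" by auto
    then show "(\<Sum>v\<in>{v. v \<in> X \<and> v \<in> A K}. (1::nat)) = card (A K \<inter> X)" by simp
  qed
  finally show ?thesis .
qed

lemma key:
  assumes sg: "simple_graph E" and fin: "finite S" and ne: "S \<noteq> {}" and P: "perf E S"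
  shows "\<exists>K\<subseteq>S. clique E K \<and> (\<forall>A. A \<subseteq> S \<longrightarrow> independent E A \<longrightarrow> card A = alpha E S \<longrightarrow> A \<inter> K \<noteq> {})"
proof (rule ccontr)
  assume neg: "\<not> ?thesis"
  have sym: "\<And>x y. E x y \<Longrightarrow> E y x" and irr: "\<forall>x. \<not> E x x"
    using sg unfolding simple_graph_def by blast+
  define KK where "KK = {K. K \<subseteq> S \<and> clique E K}"
  have finKK: "finite KK" unfolding KK_def using fin by simp
  have emp: "{} \<in> KK" unfolding KK_def clique_def by simp
  have "\<forall>K\<in>KK. \<exists>A. A \<subseteq> S \<and> independent E A \<and> card A = alpha E S \<and> A \<inter> K = {}"
    using neg unfolding KK_def by blast
  then obtain Af where Af: "\<And>K. K \<in> KK \<Longrightarrow> Af K \<subseteq> S \<and> independent E (Af K) \<and> card (Af K) = alpha E S \<and> Af K \<inter> K = {}"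
    by metis
  define a where "a = alpha E S"
  define m where "m = card KK"
  have m1: "m \<ge> 1" unfolding m_def using finKK emp
    by (metis One_nat_def card_0_eq empty_iff less_one not_le)
  obtain s where s: "s \<in> S" using ne by blast
  have a1: "a \<ge> 1"
  proof -
    have "independent E {s}" unfolding independent_def using irr by simp
    then have "card {s} \<le> a" unfolding a_def using alpha_ge[OF fin, of "{s}" E] s by simp
    then show ?thesis by simp
  qed
  define h where "h v = card {K\<in>KK. v \<in> Af K}" for v
  define B where "B = blow S h"
  have finB: "finite B" unfolding B_def by (rule blow_finite[OF fin])
  have sgb: "simple_graph (bE E)" by (rule bE_simple[OF sg])
  have irrb: "\<forall>x. \<not> bE E x x" using sgb unfolding simple_graph_def by blast
  have perfB: "perf (bE E) B" unfolding B_def by (rule blow_perf[OF sg fin P])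
  have cardblow: "card (blow X h) = (\<Sum>K\<in>KK. card (Af K \<inter> X))" if "X \<subseteq> S" for X
  proof -
    have finX: "finite X" using that fin by (rule finite_subset)
    have "card (blow X h) = (\<Sum>v\<in>X. h v)" unfolding blow_def using finX by simp
    also have "\<dots> = (\<Sum>K\<in>KK. card (Af K \<inter> X))" unfolding h_def by (rule double_count[OF finX finKK])
    finally show ?thesis .
  qed
  have cardB: "card B = m * a"
  proof -
    have "card B = (\<Sum>K\<in>KK. card (Af K \<inter> S))" unfolding B_def by (rule cardblow) simp
    also have "\<dots> = (\<Sum>K\<in>KK. a)"
    proof (rule sum.cong[OF refl])
      fix K assume "K \<in> KK"
      then have "Af K \<inter> S = Af K" "card (Af K) = a" using Af unfolding a_def by auto
      then show "card (Af K \<inter> S) = a" by simp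
    qed
    finally show ?thesis unfolding m_def by simp
  qed
  have omB: "clique_number (bE E) B \<le> m - 1"
  proof -
    obtain C where C: "C \<subseteq> B" "clique (bE E) C" "card C = clique_number (bE E) B"
      using clique_number_ex[OF finB] by blast
    define K0 where "K0 = fst ` C"
    have K0S: "K0 \<subseteq> S" unfolding K0_def using C(1) unfolding B_def blow_def by auto
    have K0cl: "clique E K0" unfolding clique_def
    proof (intro ballI impI)
      fix x y assume "x \<in> K0" "y \<in> K0" "x \<noteq> y"
      then obtain p q where "p \<in> C" "q \<in> C" "x = fst p" "y = fst q" unfolding K0_def by blast
      moreover have "p \<noteq> q" using \<open>x \<noteq> y\<close> calculation by auto
      ultimately have "bE E p q" using C(2) unfolding clique_def by blast
      then show "E x y" unfolding bE_def using \<open>x \<noteq> y\<close> \<open>x = fst p\<close> \<open>y = fst q\<close> by auto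
    qed
    have K0KK: "K0 \<in> KK" unfolding KK_def using K0S K0cl by simp
    have "C \<subseteq> blow K0 h" using C(1) unfolding B_def blow_def K0_def by force
    moreover have finK0: "finite K0" using K0S fin by (rule finite_subset)
    ultimately have "card C \<le> card (blow K0 h)"
      by (intro card_mono blow_finite)
    also have "\<dots> = (\<Sum>K\<in>KK. card (Af K \<inter> K0))" by (rule cardblow[OF K0S])
    also have "\<dots> = card (Af K0 \<inter> K0) + (\<Sum>K\<in>KK - {K0}. card (Af K \<inter> K0))"
      using finKK K0KK by (simp add: sum.remove)
    also have "\<dots> = (\<Sum>K\<in>KK - {K0}. card (Af K \<inter> K0))" using Af[OF K0KK] by simp
    also have "\<dots> \<le> of_nat (card (KK - {K0})) * 1"
    proof (rule sum_bounded_above)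
      fix K assume K: "K \<in> KK - {K0}"
      have finI: "finite (Af K \<inter> K0)" using K0S fin finite_subset by (meson finite_Int)
      have "\<forall>x\<in>Af K \<inter> K0. \<forall>y\<in>Af K \<inter> K0. x = y"
      proof (intro ballI)
        fix x y assume xy: "x \<in> Af K \<inter> K0" "y \<in> Af K \<inter> K0"
        show "x = y"
        proof (rule ccontr)
          assume "x \<noteq> y"
          then have "E x y" using xy K0cl unfolding clique_def by auto
          moreover have "independent E (Af K)" using Af K by blast
          ultimately show False using xy unfolding independent_def by auto
        qed
      qed
      then show "card (Af K \<inter> K0) \<le> 1" using card_le_Suc0_iff_eq[OF finI] by simp
    qed
    also have "\<dots> = m - 1" unfolding m_def using finKK K0KK by simp
    finally show ?thesis using C(3) by simp
  qed
  have alB: "alpha (bE E) B \<le> a"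
  proof -
    obtain I where I: "I \<subseteq> B" "independent (bE E) I" "card I = alpha (bE E) B"
      using alpha_ex[OF finB] by blast
    have inj: "inj_on fst I"
    proof (rule inj_onI)
      fix p q assume pq: "p \<in> I" "q \<in> I" "fst p = fst q"
      show "p = q"
      proof (rule ccontr)
        assume "p \<noteq> q"
        then have "snd p \<noteq> snd q" using pq(3) by (metis prod.expand)
        then have "bE E p q" unfolding bE_def using pq(3) by simp
        then show False using I(2) pq unfolding independent_def by blast
      qed
    qed
    have "independent E (fst ` I)" unfolding independent_def
    proof (intro ballI)
      fix x y assume "x \<in> fst ` I" "y \<in> fst ` I"
      then obtain p q where "p \<in> I" "q \<in> I" "x = fst p" "y = fst q" by blast
      moreover have "\<not> bE E p q" using I(2) calculation unfolding independent_def by blast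
      ultimately show "\<not> E x y" unfolding bE_def by auto
    qed
    moreover have "fst ` I \<subseteq> S" using I(1) unfolding B_def blow_def by auto
    ultimately have "card (fst ` I) \<le> a" unfolding a_def using alpha_ge[OF fin] by blast
    then show ?thesis using I(3) card_image[OF inj] by simp
  qed
  have chiB: "chromatic_number (bE E) B \<le> m - 1" using perfB omB unfolding perf_def by simp
  have "card B \<le> chromatic_number (bE E) B * alpha (bE E) B"
    using card_le_colors[OF finB chrom_colorable[of B "bE E", OF finB irrb]] .
  also have "\<dots> \<le> (m - 1) * a" using chiB alB by (rule mult_le_mono)
  finally have "m * a \<le> (m - 1) * a" using cardB by simp
  then show False using m1 a1 by (metis diff_less le_less_trans less_one mult_less_cancel2 not_le zero_less_one)
qed

lemma part:
  assumes sg: "simple_graph E" and fin: "finite S" and P: "perf E S"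
    and eq: "card S = alpha E S * clique_number E S"
  shows "\<exists>CC. \<Union>CC = S \<and> disjoint CC \<and> (\<forall>C\<in>CC. clique E C \<and> card C = clique_number E S)"
  using fin P eq
proof (induction "card S" arbitrary: S rule: less_induct)
  case less
  have irr: "\<forall>x. \<not> E x x" using sg unfolding simple_graph_def by blast
  note finS = less.prems(1) and PS = less.prems(2) and eqS = less.prems(3)
  show ?case
  proof (cases "S = {}")
    case True
    then show ?thesis by (intro exI[of _ "{}"]) simp
  next
    case ne: False
    obtain K where K: "K \<subseteq> S" "clique E K"
      "\<forall>A. A \<subseteq> S \<longrightarrow> independent E A \<longrightarrow> card A = alpha E S \<longrightarrow> A \<inter> K \<noteq> {}"
      using key[OF sg finS ne PS] by blast
    define a where "a = alpha E S"
    define w where "w = clique_number E S"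
    define S' where "S' = S - K"
    have finK: "finite K" using K(1) finS by (rule finite_subset)
    have S'S: "S' \<subseteq> S" unfolding S'_def by auto
    have finS': "finite S'" using S'S finS by (rule finite_subset)
    have PS': "perf E S'" using PS S'S by (rule perf_hered)
    obtain s where s: "s \<in> S" using ne by blast
    have a1: "a \<ge> 1"
    proof -
      have "independent E {s}" unfolding independent_def using irr by simp
      then have "card {s} \<le> a" unfolding a_def using alpha_ge[OF finS, of "{s}" E] s by simp
      then show ?thesis by simp
    qed
    have w1: "w \<ge> 1"
    proof -
      have "clique E {s}" unfolding clique_def by simp
      then have "card {s} \<le> w" unfolding w_def using clique_number_ge[OF finS, of "{s}" E] s by simp
      then show ?thesis by simp
    qed
    have Kw: "card K \<le> w" unfolding w_def using clique_number_ge[OF finS K(1,2)] .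
    define a' where "a' = alpha E S'"
    define w' where "w' = clique_number E S'"
    have a'a: "a' \<le> a - 1"
    proof -
      obtain A where A: "A \<subseteq> S'" "independent E A" "card A = a'"
        using alpha_ex[OF finS'] unfolding a'_def by blast
      have "card A \<le> a" unfolding a_def using alpha_ge[OF finS _ A(2)] A(1) S'S by auto
      moreover have "card A \<noteq> a" using K(3) A(1,2) unfolding a_def S'_def by blast
      ultimately show ?thesis using A(3) by simp
    qed
    have w'w: "w' \<le> w" unfolding w'_def w_def by (rule clique_number_mono[OF finS S'S])
    have cS': "card S' \<le> w' * a'"
    proof -
      have "chromatic_number E S' = w'" using PS' unfolding perf_def w'_def by simp
      then show ?thesis unfolding a'_def
        using card_le_colors[OF finS' chrom_colorable[of S' E, OF finS' irr]] by simp
    qed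
    have cS'2: "card S' = a * w - card K" unfolding S'_def using eqS K(1) finK
      unfolding a_def w_def by (simp add: card_Diff_subset)
    have m1: "a' * w' \<le> a' * w" using w'w by simp
    have m2: "a' * w \<le> (a - 1) * w" using a'a by simp
    have m3: "(a - 1) * w = a * w - w" by (simp add: diff_mult_distrib)
    have wle: "w \<le> a * w" using a1 by simp
    have cS'm: "card S' \<le> a' * w'" using cS' by (simp add: mult.commute)
    have Kw2: "card K = w" using cS'm cS'2 m1 m2 m3 Kw wle by linarith
    have cS'3: "card S' = a' * w'" using cS'm cS'2 m1 m2 m3 Kw2 wle by linarith
    show ?thesis
    proof (cases "S' = {}")
      case True
      then have "K = S" unfolding S'_def using K(1) by auto
      then show ?thesis using K Kw2 unfolding w_def by (intro exI[of _ "{K}"]) simp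
    next
      case False
      then obtain t where t: "t \<in> S'" by blast
      have a'1: "a' \<ge> 1"
      proof -
        have "independent E {t}" unfolding independent_def using irr by simp
        then have "card {t} \<le> a'" unfolding a'_def using alpha_ge[OF finS', of "{t}" E] t by simp
        then show ?thesis by simp
      qed
      have "a' * w' = a' * w" using cS'3 cS'2 m1 m2 m3 Kw2 by linarith
      then have w'eq: "w' = w" using a'1 by simp
      have lt: "card S' < card S"
      proof -
        have "K \<noteq> {}" using Kw2 w1 by auto
        then have "S' \<subset> S" unfolding S'_def using K(1) by auto
        then show ?thesis using finS by (simp add: psubset_card_mono)
      qed
      obtain CC where CC: "\<Union>CC = S'" "disjoint CC" "\<forall>C\<in>CC. clique E C \<and> card C = w'"
        using less.hyps[OF lt finS' PS'] cS'3 unfolding a'_def w'_def by blast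
      have "\<Union>(insert K CC) = S" using CC(1) K(1) unfolding S'_def by auto
      moreover have "disjoint (insert K CC)"
      proof -
        have "\<forall>C\<in>CC. C \<noteq> K \<longrightarrow> disjnt K C \<and> disjnt C K"
          using CC(1) unfolding S'_def disjnt_def by auto
        then show ?thesis using CC(2) by (simp add: pairwise_insert)
      qed
      moreover have "\<forall>C\<in>insert K CC. clique E C \<and> card C = w" using CC(3) K(2) Kw2 w'eq by auto
      ultimately show ?thesis unfolding w_def by blast
    qed
  qed
qed

lemma VP_lin:
  fixes E :: "'a::finite \<Rightarrow> 'a \<Rightarrow> bool" and wv :: "real^'a"
  assumes "\<And>S. independent E S \<Longrightarrow> (\<Sum>i\<in>S. wv$i) \<le> c" and "x \<in> VP E"
  shows "(\<Sum>i\<in>UNIV. wv$i * x$i) \<le> c"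
proof -
  have "VP E \<subseteq> {x. inner wv x \<le> c}"
    unfolding VP_def
  proof (rule hull_minimal)
    show "{(\<chi> i. if i \<in> S then 1 else 0) | S. independent E S} \<subseteq> {x. inner wv x \<le> c}"
    proof
      fix y :: "real^'a" assume "y \<in> {(\<chi> i. if i \<in> S then 1 else 0) | S. independent E S}"
      then obtain S where S: "y = (\<chi> i. if i \<in> S then 1 else 0)" "independent E S" by auto
      have "inner wv y = (\<Sum>i\<in>UNIV. wv$i * (if i \<in> S then 1 else 0))"
        unfolding S(1) by (simp add: inner_vec_def)
      also have "\<dots> = (\<Sum>i\<in>UNIV. if i \<in> S then wv$i else 0)" by (rule sum.cong) auto
      also have "\<dots> = (\<Sum>i\<in>UNIV \<inter> S. wv$i)" by (rule sum.inter_restrict[symmetric]) simp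
      also have "\<dots> \<le> c" using assms(1)[OF S(2)] by simp
      finally show "y \<in> {x. inner wv x \<le> c}" by simp
    qed
    show "convex {x. inner wv x \<le> c}" by (rule convex_halfspace_le)
  qed
  then show ?thesis using assms(2) by (auto simp: inner_vec_def)
qed

lemma VP_le1:
  fixes E :: "'a::finite \<Rightarrow> 'a \<Rightarrow> bool"
  assumes "x \<in> VP E"
  shows "x $ i \<le> 1"
proof -
  define wv :: "real^'a" where "wv = (\<chi> j. if j = i then 1 else 0)"
  have "(\<Sum>j\<in>UNIV. wv$j * x$j) \<le> 1"
  proof (rule VP_lin[OF _ assms])
    fix S assume "independent E S"
    have "(\<Sum>j\<in>S. wv$j) = (\<Sum>j\<in>S. if j = i then 1 else 0)" unfolding wv_def by simp
    also have "\<dots> \<le> 1" by simp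
    finally show "(\<Sum>j\<in>S. wv$j) \<le> 1" .
  qed
  moreover have "(\<Sum>j\<in>UNIV. wv$j * x$j) = x$i"
  proof -
    have "(\<Sum>j\<in>UNIV. wv$j * x$j) = (\<Sum>j\<in>UNIV. if j = i then x$j else 0)"
      unfolding wv_def by (rule sum.cong) auto
    then show ?thesis by simp
  qed
  ultimately show ?thesis by simp
qed

definition feas :: "('a::finite \<Rightarrow> 'a \<Rightarrow> bool) \<Rightarrow> real^'a \<Rightarrow> (real^'a) set" where
  "feas E P = {a \<in> VP E. \<forall>i. P $ i > 0 \<longrightarrow> a $ i > 0}"

definition obj :: "real^('a::finite) \<Rightarrow> real^'a \<Rightarrow> real" where
  "obj P a = (\<Sum>i\<in>UNIV. P $ i * log 2 (1 / a $ i))"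

lemma ge_def2: "graph_entropy E P = Inf (obj P ` feas E P)"
  unfolding graph_entropy_def obj_def feas_def by simp

lemma obj_nonneg:
  assumes "\<forall>i. P$i \<ge> 0" "a \<in> feas E P"
  shows "0 \<le> obj P a"
  unfolding obj_def
proof (rule sum_nonneg)
  fix i :: 'a
  show "0 \<le> P $ i * log 2 (1 / a $ i)"
  proof (cases "P $ i > 0")
    case True
    then have "a $ i > 0" "a $ i \<le> 1" using assms(2) VP_le1 unfolding feas_def by auto
    then have "0 \<le> log 2 (1 / a $ i)" by simp
    then show ?thesis using True by simp
  next
    case False
    then have "P $ i = 0" using assms(1)[rule_format, of i] by linarith
    then show ?thesis by simp
  qed
qed

lemma bdd_obj: "\<forall>i. P$i \<ge> 0 \<Longrightarrow> bdd_below (obj P ` feas E P)"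
  by (rule bdd_belowI[of _ 0]) (auto intro: obj_nonneg)

lemma log_bound:
  fixes a :: "'b \<Rightarrow> real"
  assumes "finite I" "\<forall>i\<in>I. a i > 0" "w > 0" "(\<Sum>i\<in>I. a i) * w \<le> real (card I)"
  shows "(\<Sum>i\<in>I. ln (a i)) \<le> - real (card I) * ln w"
proof -
  have "(\<Sum>i\<in>I. ln (a i)) \<le> (\<Sum>i\<in>I. w * a i - 1 - ln w)"
  proof (rule sum_mono)
    fix i assume i: "i \<in> I"
    have pos: "w * a i > 0" using assms(2,3) i by simp
    have ai: "a i > 0" using assms(2) i by simp
    have "ln (w * a i) = ln w + ln (a i)" by (rule ln_mult_pos[OF assms(3) ai])
    moreover have "ln (w * a i) \<le> w * a i - 1" using ln_le_minus_one[OF pos] .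
    ultimately show "ln (a i) \<le> w * a i - 1 - ln w" by simp
  qed
  also have "\<dots> = w * (\<Sum>i\<in>I. a i) - real (card I) - real (card I) * ln w"
    by (simp add: sum_subtractf sum_distrib_left)
  also have "\<dots> \<le> - real (card I) * ln w" using assms(4) by (simp add: mult.commute)
  finally show ?thesis .
qed

lemma obj_lower:
  fixes a :: "real^'a::finite"
  assumes I: "I \<noteq> {}" and apos: "\<forall>i\<in>I. a$i > 0" and w: "w > 0"
    and sb: "(\<Sum>i\<in>I. a$i) * w \<le> real (card I)"
  shows "log 2 w \<le> obj (\<chi> i. if i \<in> I then 1 / real (card I) else 0) a"
proof -
  define m where "m = real (card I)"
  have m: "m > 0" unfolding m_def using I by (simp add: card_gt_0_iff)
  have "obj (\<chi> i. if i \<in> I then 1 / real (card I) else 0) a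
      = (\<Sum>i\<in>UNIV. if i \<in> I then 1 / m * log 2 (1 / a$i) else 0)"
    unfolding obj_def m_def by (rule sum.cong) auto
  also have "\<dots> = (\<Sum>i\<in>UNIV \<inter> I. 1 / m * log 2 (1 / a$i))" by (rule sum.inter_restrict[symmetric]) simp
  also have "\<dots> = (\<Sum>i\<in>I. 1 / m * (- ln (a$i) / ln 2))"
  proof (rule sum.cong)
    fix i assume "i \<in> I"
    then have "a$i > 0" using apos by simp
    then show "1 / m * log 2 (1 / a$i) = 1 / m * (- ln (a$i) / ln 2)"
      by (simp add: log_def ln_div)
  qed simp
  also have "\<dots> = - (\<Sum>i\<in>I. ln (a$i)) / (m * ln 2)"
    by (simp add: sum_distrib_left sum_divide_distrib sum_negf)
  finally have eq: "obj (\<chi> i. if i \<in> I then 1 / real (card I) else 0) a = - (\<Sum>i\<in>I. ln (a$i)) / (m * ln 2)" .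
  have "(\<Sum>i\<in>I. ln (a$i)) \<le> - m * ln w" unfolding m_def
    using log_bound[of I "\<lambda>i. a$i" w] apos w sb by simp
  then have "m * ln w \<le> - (\<Sum>i\<in>I. ln (a$i))" by simp
  then have "m * ln w / (m * ln 2) \<le> - (\<Sum>i\<in>I. ln (a$i)) / (m * ln 2)"
    using m by (intro divide_right_mono) auto
  moreover have "m * ln w / (m * ln 2) = log 2 w" using m by (simp add: log_def)
  ultimately show ?thesis using eq by simp
qed

lemma obj_eq:
  fixes a :: "real^'a::finite"
  assumes I: "I \<noteq> {}" and apos: "\<forall>i\<in>I. a$i > 0"
  shows "obj (\<chi> i. if i \<in> I then 1 / real (card I) else 0) a = - (\<Sum>i\<in>I. ln (a$i)) / (real (card I) * ln 2)"
proof -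
  define m where "m = real (card I)"
  have "obj (\<chi> i. if i \<in> I then 1 / real (card I) else 0) a
      = (\<Sum>i\<in>UNIV. if i \<in> I then 1 / m * log 2 (1 / a$i) else 0)"
    unfolding obj_def m_def by (rule sum.cong) auto
  also have "\<dots> = (\<Sum>i\<in>UNIV \<inter> I. 1 / m * log 2 (1 / a$i))" by (rule sum.inter_restrict[symmetric]) simp
  also have "\<dots> = (\<Sum>i\<in>I. 1 / m * (- ln (a$i) / ln 2))"
  proof (rule sum.cong)
    fix i assume "i \<in> I"
    then have "a$i > 0" using apos by simp
    then show "1 / m * log 2 (1 / a$i) = 1 / m * (- ln (a$i) / ln 2)"
      by (simp add: log_def ln_div)
  qed simp
  also have "\<dots> = - (\<Sum>i\<in>I. ln (a$i)) / (m * ln 2)"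
    by (simp add: sum_distrib_left sum_divide_distrib sum_negf)
  finally show ?thesis unfolding m_def .
qed

lemma astar_VP:
  fixes E :: "'a::finite \<Rightarrow> 'a \<Rightarrow> bool"
  assumes col: "colorable E (UNIV::'a set) k" and k: "k \<ge> 1"
  shows "(\<chi> i. 1 / real k) \<in> VP E"
proof -
  obtain c where c: "\<forall>x. c x < k" "\<forall>x y. E x y \<longrightarrow> c x \<noteq> c y"
    using col unfolding colorable_def by blast
  define y where "y j = (\<chi> i. if i \<in> {x. c x = j} then (1::real) else 0)" for j
  have "(\<Sum>j\<in>{..<k}. (1 / real k) *\<^sub>R y j) \<in> VP E"
    unfolding VP_def
  proof (rule convex_sum[OF _ convex_convex_hull])
    show "finite {..<k}" by simp
    show "(\<Sum>i\<in>{..<k}. 1 / real k) = 1" using k by simp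
    show "\<And>i. i \<in> {..<k} \<Longrightarrow> 0 \<le> 1 / real k" by simp
    fix j assume "j \<in> {..<k}"
    have "independent E {x. c x = j}" unfolding independent_def using c(2) by fastforce
    then have "y j \<in> {(\<chi> i. if i \<in> S then 1 else 0) | S. independent E S}" unfolding y_def by blast
    then show "y j \<in> convex hull {(\<chi> i. if i \<in> S then 1 else 0) | S. independent E S}"
      by (rule hull_inc)
  qed
  moreover have "(\<Sum>j\<in>{..<k}. (1 / real k) *\<^sub>R y j) = (\<chi> i. 1 / real k)"
  proof (rule vec_eq_iff[THEN iffD2], rule allI)
    fix i
    have "(\<Sum>j\<in>{..<k}. (1 / real k) *\<^sub>R y j) $ i = 1 / real k"
      unfolding y_def using c(1) by (simp add: sum_component sum_divide_distrib[symmetric])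
    then show "(\<Sum>j\<in>{..<k}. (1 / real k) *\<^sub>R y j) $ i = (\<chi> i. 1 / real k) $ i" by simp
  qed
  ultimately show ?thesis by simp
qed

lemma ent_upper:
  fixes E :: "'a::finite \<Rightarrow> 'a \<Rightarrow> bool"
  assumes col: "colorable E (UNIV::'a set) w" and w: "w \<ge> 1" and P: "prob_dist P"
  shows "graph_entropy E P \<le> log 2 (real w)"
proof -
  have feas: "(\<chi> i. 1 / real w) \<in> feas E P" unfolding feas_def using astar_VP[OF col w] w by auto
  have "graph_entropy E P \<le> obj P (\<chi> i. 1 / real w)" unfolding ge_def2
    using bdd_obj[of P E] P feas unfolding prob_dist_def by (intro cInf_lower) auto
  also have "obj P (\<chi> i. 1 / real w) = (\<Sum>i\<in>UNIV. P$i) * log 2 (real w)"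
    unfolding obj_def by (simp add: sum_distrib_right)
  also have "\<dots> = log 2 (real w)" using P unfolding prob_dist_def by simp
  finally show ?thesis .
qed

lemma ent_uniform_lower:
  fixes E :: "'a::finite \<Rightarrow> 'a \<Rightarrow> bool"
  assumes col: "colorable E (UNIV::'a set) w" and w: "w \<ge> 1"
    and cond: "\<forall>A. independent E A \<longrightarrow> card A * w \<le> CARD('a)"
  shows "log 2 (real w) \<le> graph_entropy E uniform_dist"
proof -
  have U: "uniform_dist = (\<chi> i::'a. if i \<in> UNIV then 1 / real (card (UNIV::'a set)) else 0)"
    unfolding uniform_dist_def by simp
  have feas: "(\<chi> i. 1 / real w) \<in> feas E uniform_dist" unfolding feas_def using astar_VP[OF col w] w by auto
  show ?thesis unfolding ge_def2
  proof (rule cInf_greatest)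
    show "obj uniform_dist ` feas E uniform_dist \<noteq> {}" using feas by blast
    fix r assume "r \<in> obj uniform_dist ` feas E uniform_dist"
    then obtain a where a: "a \<in> feas E uniform_dist" "r = obj uniform_dist a" by blast
    have apos: "\<forall>i\<in>UNIV. a$i > 0" using a(1) unfolding feas_def uniform_dist_def by auto
    have "(\<Sum>i\<in>UNIV. (\<chi> j. (1::real))$i * a$i) \<le> real CARD('a) / real w"
    proof (rule VP_lin)
      show "a \<in> VP E" using a(1) unfolding feas_def by simp
      fix S :: "'a set" assume "independent E S"
      then have "card S * w \<le> CARD('a)" using cond by blast
      then have "real (card S) * real w \<le> real CARD('a)" by (metis of_nat_le_iff of_nat_mult)
      then have "real (card S) \<le> real CARD('a) / real w" using w by (simp add: field_simps)
      then show "(\<Sum>i\<in>S. (\<chi> j. (1::real))$i) \<le> real CARD('a) / real w" by simp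
    qed
    then have "(\<Sum>i\<in>UNIV. a$i) * real w \<le> real (card (UNIV::'a set))" using w by (simp add: field_simps)
    then have "log 2 (real w) \<le> obj (\<chi> i::'a. if i \<in> UNIV then 1 / real (card (UNIV::'a set)) else 0) a"
      using w apos by (intro obj_lower) auto
    then show "log 2 (real w) \<le> r" using a(2) U by simp
  qed
qed

lemma ent_clique_lower:
  fixes E :: "'a::finite \<Rightarrow> 'a \<Rightarrow> bool"
  assumes col: "colorable E (UNIV::'a set) w" and w: "w \<ge> 1"
    and K: "clique E K" "card K = w"
  shows "log 2 (real w) \<le> graph_entropy E (\<chi> i. if i \<in> K then 1 / real (card K) else 0)"
    (is "_ \<le> graph_entropy E ?P")
proof -
  have Kne: "K \<noteq> {}" using K(2) w by auto
  have feas: "(\<chi> i. 1 / real w) \<in> feas E ?P" unfolding feas_def using astar_VP[OF col w] w by auto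
  show ?thesis unfolding ge_def2
  proof (rule cInf_greatest)
    show "obj ?P ` feas E ?P \<noteq> {}" using feas by blast
    fix r assume "r \<in> obj ?P ` feas E ?P"
    then obtain a where a: "a \<in> feas E ?P" "r = obj ?P a" by blast
    have apos: "\<forall>i\<in>K. a$i > 0" using a(1) Kne K(2) w unfolding feas_def by auto
    define wv :: "real^'a" where "wv = (\<chi> i. if i \<in> K then 1 else 0)"
    have "(\<Sum>i\<in>UNIV. wv$i * a$i) \<le> 1"
    proof (rule VP_lin)
      show "a \<in> VP E" using a(1) unfolding feas_def by simp
      fix S :: "'a set" assume S: "independent E S"
      have "(\<Sum>i\<in>S. wv$i) = (\<Sum>i\<in>S. if i \<in> K then 1 else 0)" unfolding wv_def by simp
      also have "\<dots> = real (card (S \<inter> K))"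
        by (simp add: sum.If_cases Int_def)
      also have "\<dots> \<le> 1"
      proof -
        have "\<forall>x\<in>S \<inter> K. \<forall>y\<in>S \<inter> K. x = y"
          using S K(1) unfolding independent_def clique_def by blast
        then have "card (S \<inter> K) \<le> Suc 0" using card_le_Suc0_iff_eq[of "S \<inter> K"] by simp
        then show ?thesis by simp
      qed
      finally show "(\<Sum>i\<in>S. wv$i) \<le> 1" .
    qed
    moreover have "(\<Sum>i\<in>UNIV. wv$i * a$i) = (\<Sum>i\<in>K. a$i)"
    proof -
      have "(\<Sum>i\<in>UNIV. wv$i * a$i) = (\<Sum>i\<in>UNIV. if i \<in> K then a$i else 0)"
        unfolding wv_def by (rule sum.cong) auto
      also have "\<dots> = (\<Sum>i\<in>UNIV \<inter> K. a$i)" by (rule sum.inter_restrict[symmetric]) simp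
      finally show ?thesis by simp
    qed
    ultimately have "(\<Sum>i\<in>K. a$i) * real w \<le> real (card K)" using K(2) w
      by (simp add: mult_right_le_one_le)
    then have "log 2 (real w) \<le> obj ?P a" using w apos Kne by (intro obj_lower) auto
    then show "log 2 (real w) \<le> r" using a(2) by simp
  qed
qed

lemma clique_prob:
  fixes K :: "'a::finite set"
  assumes "K \<noteq> {}"
  shows "prob_dist (\<chi> i. if i \<in> K then 1 / real (card K) else 0)"
proof -
  have "(\<Sum>i\<in>UNIV. (\<chi> i. if i \<in> K then 1 / real (card K) else 0) $ i) = (\<Sum>i\<in>UNIV. if i \<in> K then 1 / real (card K) else 0)"
    by simp
  also have "\<dots> = (\<Sum>i\<in>UNIV \<inter> K. 1 / real (card K))"
    by (rule sum.inter_restrict[symmetric]) simp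
  also have "\<dots> = 1" using assms by simp
  finally show ?thesis unfolding prob_dist_def by simp
qed

lemma viol:
  fixes E :: "'a::finite \<Rightarrow> 'a \<Rightarrow> bool"
  assumes col: "colorable E (UNIV::'a set) w" and w: "w \<ge> 1"
    and S0: "independent E S0" and big: "card S0 * w > CARD('a)"
  shows "\<exists>a\<in>feas E uniform_dist. obj uniform_dist a < log 2 (real w)"
proof -
  define n where "n = real CARD('a)"
  define s where "s = real (card S0)"
  define wr where "wr = real w"
  define d where "d = wr - 1"
  have cS0: "card S0 \<le> CARD('a)" by (rule card_mono) auto
  have "0 < CARD('a)" by simp
  then have n1: "n \<ge> 1" unfolding n_def by linarith
  have sn: "s \<le> n" unfolding s_def n_def using cS0 by simp
  have "CARD('a) + 1 \<le> card S0 * w" using big by simp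
  then have "real (CARD('a) + 1) \<le> real (card S0 * w)" by (rule of_nat_mono)
  then have big': "n + 1 \<le> s * wr" unfolding n_def s_def wr_def by simp
  have w2: "w \<ge> 2"
  proof (rule ccontr)
    assume "\<not> w \<ge> 2"
    then have "w = 1" using w by simp
    then show False using big cS0 by simp
  qed
  have wr2: "wr \<ge> 2" unfolding wr_def using w2 by simp
  have d1: "d \<ge> 1" unfolding d_def using wr2 by simp
  have s1: "s \<ge> 1"
  proof -
    have "card S0 \<noteq> 0" using big by (metis mult_0 not_less_zero)
    then have "1 \<le> card S0" by linarith
    then show ?thesis unfolding s_def by simp
  qed
  define D where "D = s * d^2 + 2 * n"
  define t where "t = 1 / (D + 1)"
  have D1: "D \<ge> 1" unfolding D_def using n1 s1 by (simp add: add_increasing)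
  have t0: "t > 0" unfolding t_def using D1 by simp
  have th: "t \<le> 1/2" unfolding t_def using D1 by (simp add: field_simps)
  have dD: "d \<le> D"
  proof -
    have "d \<le> d^2" using d1 by (simp add: power2_eq_square)
    also have "\<dots> \<le> s * d^2" using s1 by (simp add: mult_le_cancel_right1)
    also have "\<dots> \<le> D" unfolding D_def using n1 by simp
    finally show ?thesis .
  qed
  have td: "t * d \<le> 1" unfolding t_def using dD D1 by (simp add: field_simps)
  have td0: "t * d \<ge> 0" using t0 d1 by simp
  define ind :: "real^'a" where "ind = (\<chi> i. if i \<in> S0 then 1 else 0)"
  define ast :: "real^'a" where "ast = (\<chi> i. 1 / wr)"
  define a where "a = (1 - t) *\<^sub>R ast + t *\<^sub>R ind"
  have astVP: "ast \<in> VP E" unfolding ast_def wr_def by (rule astar_VP[OF col w])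
  have indVP: "ind \<in> VP E" unfolding VP_def ind_def
    by (rule hull_inc) (use S0 in blast)
  have aVP: "a \<in> VP E" unfolding a_def VP_def
    by (rule convexD[OF convex_convex_hull]) (use astVP indVP t0 th in \<open>auto simp: VP_def\<close>)
  have wr0: "wr > 0" using wr2 by simp
  have acomp: "wr * a$i = (if i \<in> S0 then 1 + t * d else 1 - t)" for i
    unfolding a_def ast_def ind_def d_def using wr0 by (auto simp: field_simps)
  have apos: "a$i > 0" for i
  proof -
    have "wr * a$i > 0" using acomp[of i] th td0 by auto
    then show ?thesis using wr0 by (simp add: zero_less_mult_iff)
  qed
  have U: "uniform_dist = (\<chi> i::'a. if i \<in> UNIV then 1 / real (card (UNIV::'a set)) else 0)"
    unfolding uniform_dist_def by simp
  have feasa: "a \<in> feas E uniform_dist" unfolding feas_def using aVP apos by simp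
  have objeq: "obj uniform_dist a = - (\<Sum>i\<in>UNIV. ln (a$i)) / (n * ln 2)"
    unfolding U n_def by (rule obj_eq) (use apos in auto)
  have lnsplit: "(\<Sum>i\<in>UNIV. ln (a$i)) = (\<Sum>i\<in>UNIV. ln (wr * a$i)) - n * ln wr"
  proof -
    have "(\<Sum>i\<in>UNIV. ln (a$i)) = (\<Sum>i\<in>UNIV. ln (wr * a$i) - ln wr)"
      by (rule sum.cong[OF refl]) (simp add: ln_mult_pos[OF wr0 apos])
    also have "\<dots> = (\<Sum>i\<in>UNIV. ln (wr * a$i)) - n * ln wr" unfolding n_def by (simp add: sum_subtractf)
    finally show ?thesis .
  qed
  have sumeq: "(\<Sum>i\<in>UNIV. ln (wr * a$i)) = s * ln (1 + t * d) + (n - s) * ln (1 - t)"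
  proof -
    have "(\<Sum>i\<in>UNIV. ln (wr * a$i)) = (\<Sum>i\<in>UNIV - S0. ln (wr * a$i)) + (\<Sum>i\<in>S0. ln (wr * a$i))"
      by (rule sum.subset_diff) auto
    also have "(\<Sum>i\<in>S0. ln (wr * a$i)) = (\<Sum>i\<in>S0. ln (1 + t * d))"
      by (rule sum.cong[OF refl]) (simp add: acomp)
    also have "(\<Sum>i\<in>UNIV - S0. ln (wr * a$i)) = (\<Sum>i\<in>UNIV - S0. ln (1 - t))"
      by (rule sum.cong[OF refl]) (simp add: acomp)
    also have "card (UNIV - S0) = CARD('a) - card S0" by (rule card_Diff_subset) auto
    then have "(\<Sum>i\<in>UNIV - S0. ln (1 - t)) = (n - s) * ln (1 - t)"
      unfolding n_def s_def using cS0 by (simp add: of_nat_diff)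
    finally show ?thesis unfolding s_def by simp
  qed
  have l1: "t * d - (t * d)^2 \<le> ln (1 + t * d)" using ln_one_plus_pos_lower_bound[OF td0 td] .
  have l2: "- t - 2 * t^2 \<le> ln (1 - t)" using ln_one_minus_pos_lower_bound[of t] t0 th by simp
  have Q: "s * (t * d - (t * d)^2) + (n - s) * (- t - 2 * t^2) \<le> s * ln (1 + t * d) + (n - s) * ln (1 - t)"
    using l1 l2 s1 sn by (intro add_mono mult_left_mono) auto
  have Qeq: "s * (t * d - (t * d)^2) + (n - s) * (- t - 2 * t^2) = t * (s * (d + 1) - n) - t^2 * (s * d^2 + 2 * (n - s))"
    by (simp add: algebra_simps power2_eq_square)
  have q1: "t \<le> t * (s * (d + 1) - n)"
  proof -
    have "1 \<le> s * (d + 1) - n" using big' unfolding d_def by simp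
    then show ?thesis using t0 by (simp add: mult_le_cancel_left1)
  qed
  have q2: "t^2 * (s * d^2 + 2 * (n - s)) \<le> t^2 * D" unfolding D_def using s1 by (simp add: mult_left_mono)
  have q3: "t - t^2 * D > 0"
  proof -
    have "t - t^2 * D = t * (1 - t * D)" by (simp add: algebra_simps power2_eq_square)
    also have "1 - t * D = t" unfolding t_def using D1 by (simp add: field_simps)
    finally have "t - t^2 * D = t * t" .
    then show ?thesis using t0 by simp
  qed
  have pos: "(\<Sum>i\<in>UNIV. ln (wr * a$i)) > 0" using sumeq Q Qeq q1 q2 q3 by linarith
  have "obj uniform_dist a = (n * ln wr - (\<Sum>i\<in>UNIV. ln (wr * a$i))) / (n * ln 2)"
    using objeq lnsplit by simp
  also have "\<dots> < (n * ln wr) / (n * ln 2)"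
    using pos n1 by (intro divide_strict_right_mono) auto
  also have "\<dots> = log 2 (real w)" unfolding wr_def log_def using n1 by simp
  finally show ?thesis using feasa by blast
qed

theorem mainTheorem2:
  fixes E :: "'a::finite \<Rightarrow> 'a \<Rightarrow> bool"
  assumes "simple_graph E" and "perfect E"
  shows "entropy_symmetric E \<longleftrightarrow>
    (\<exists>\<C> :: 'a set set. \<Union>\<C> = UNIV \<and> disjoint \<C> \<and>
       (\<forall>C\<in>\<C>. clique E C \<and> card C = clique_number E UNIV))"
proof -
  note sg = assms(1)
  have irr: "\<forall>x. \<not> E x x" using sg unfolding simple_graph_def by blast
  define w where "w = clique_number E (UNIV::'a set)"
  have PU: "perf E (UNIV::'a set)" using assms(2) unfolding perfect_def perf_def by simp
  have chi: "chromatic_number E (UNIV::'a set) = w" using assms(2) unfolding perfect_def w_def by simp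
  have col: "colorable E (UNIV::'a set) w"
    using chrom_colorable[of "UNIV::'a set" E, OF finite_class.finite_UNIV irr] chi by simp
  have w1: "w \<ge> 1"
  proof -
    have "clique E {undefined}" unfolding clique_def by simp
    then have "card {undefined::'a} \<le> w" unfolding w_def by (intro clique_number_ge) auto
    then show ?thesis by simp
  qed
  define Cond where "Cond \<longleftrightarrow> (\<forall>A. independent E A \<longrightarrow> card A * w \<le> CARD('a))"
  have part_cond: "Cond" if "\<exists>\<C> :: 'a set set. \<Union>\<C> = UNIV \<and> disjoint \<C> \<and>
       (\<forall>C\<in>\<C>. clique E C \<and> card C = clique_number E UNIV)"
  proof -
    from that obtain CC :: "'a set set" where CC0: "\<Union>CC = UNIV \<and> disjoint CC \<and> (\<forall>C\<in>CC. clique E C \<and> card C = clique_number E UNIV)" ..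
    have CC1: "\<Union>CC = UNIV" using CC0 by (rule conjunct1)
    have CC2: "disjoint CC" using CC0[THEN conjunct2] by (rule conjunct1)
    have CC3: "\<forall>C\<in>CC. clique E C \<and> card C = clique_number E UNIV" using CC0[THEN conjunct2] by (rule conjunct2)
    note CC = CC1 CC2 CC3
    have finCC: "finite CC" by simp
    have dis: "\<forall>i\<in>CC. \<forall>j\<in>CC. i \<noteq> j \<longrightarrow> i \<inter> j = {}" using CC(2) unfolding disjoint_def by blast
    have CCw: "\<And>C. C \<in> CC \<Longrightarrow> card C = w" using CC(3) unfolding w_def by blast
    have n: "CARD('a) = card CC * w"
    proof -
      have "CARD('a) = card (\<Union>((\<lambda>C. C) ` CC))" using CC(1) by simp
      also have "\<dots> = (\<Sum>C\<in>CC. card C)"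
        by (rule card_UN_disjoint[OF finCC]) (simp, use dis in blast)
      also have "\<dots> = (\<Sum>C\<in>CC. w)" using CCw by (rule sum.cong[OF refl])
      finally show ?thesis by simp
    qed
    show ?thesis unfolding Cond_def
    proof (intro allI impI)
      fix A :: "'a set" assume A: "independent E A"
      have cov: "\<forall>x. \<exists>C\<in>CC. x \<in> C" using CC(1) by (metis UNIV_I Union_iff)
      have "\<Union>((\<lambda>C. A \<inter> C) ` CC) = A"
      proof
        show "\<Union>((\<lambda>C. A \<inter> C) ` CC) \<subseteq> A" by blast
        show "A \<subseteq> \<Union>((\<lambda>C. A \<inter> C) ` CC)"
        proof
          fix x assume "x \<in> A"
          moreover obtain C where "C \<in> CC" "x \<in> C" using cov by blast
          ultimately show "x \<in> \<Union>((\<lambda>C. A \<inter> C) ` CC)" by blast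
        qed
      qed
      then have "card A = card (\<Union>((\<lambda>C. A \<inter> C) ` CC))" by simp
      also have "\<dots> = (\<Sum>C\<in>CC. card (A \<inter> C))"
        by (rule card_UN_disjoint[OF finCC]) (simp, use dis in blast)
      also have "\<dots> \<le> (\<Sum>C\<in>CC. 1)"
      proof (rule sum_mono)
        fix C assume C: "C \<in> CC"
        have "\<forall>x\<in>A \<inter> C. \<forall>y\<in>A \<inter> C. x = y"
        proof (intro ballI)
          fix x y assume xy: "x \<in> A \<inter> C" "y \<in> A \<inter> C"
          show "x = y"
          proof (rule ccontr)
            assume "x \<noteq> y"
            moreover have "clique E C" using CC(3) C by blast
            ultimately have "E x y" using xy unfolding clique_def by blast
            then show False using xy A unfolding independent_def by auto
          qed
        qed
        then show "card (A \<inter> C) \<le> 1" using card_le_Suc0_iff_eq[of "A \<inter> C"] by simp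
      qed
      finally have "card A \<le> card CC" by simp
      then have "card A * w \<le> card CC * w" by (rule mult_le_mono1)
      then show "card A * w \<le> CARD('a)" using n by simp
    qed
  qed
  have cond_part: "\<exists>\<C> :: 'a set set. \<Union>\<C> = UNIV \<and> disjoint \<C> \<and>
       (\<forall>C\<in>\<C>. clique E C \<and> card C = clique_number E UNIV)" if Cond
  proof -
    obtain A where A: "A \<subseteq> UNIV" "independent E A" "card A = alpha E (UNIV::'a set)"
      by (rule alpha_ex[OF finite_class.finite_UNIV, of E]) auto
    have "alpha E (UNIV::'a set) * w \<le> CARD('a)" using that A unfolding Cond_def by auto
    moreover have "CARD('a) \<le> w * alpha E (UNIV::'a set)" using card_le_colors[OF finite_class.finite_UNIV col] .
    ultimately have "CARD('a) = alpha E (UNIV::'a set) * clique_number E UNIV"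
      unfolding w_def by (simp add: mult.commute)
    then show ?thesis using part[OF sg finite_class.finite_UNIV PU] by simp
  qed
  have cond_sym: "entropy_symmetric E" if Cond
    unfolding entropy_symmetric_def
  proof (intro allI impI)
    fix P :: "real^'a" assume P: "prob_dist P"
    have "graph_entropy E P \<le> log 2 (real w)" by (rule ent_upper[OF col w1 P])
    also have "\<dots> \<le> graph_entropy E uniform_dist"
      using ent_uniform_lower[OF col w1] that unfolding Cond_def by blast
    finally show "graph_entropy E P \<le> graph_entropy E uniform_dist" .
  qed
  have sym_cond: Cond if symm: "entropy_symmetric E"
  proof (rule ccontr)
    assume "\<not> Cond"
    then obtain S0 where S0: "independent E S0" "card S0 * w > CARD('a)" unfolding Cond_def by auto
    obtain a where a: "a \<in> feas E uniform_dist" "obj uniform_dist a < log 2 (real w)"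
      using viol[OF col w1 S0] by blast
    have Unn: "\<forall>i. uniform_dist $ i \<ge> (0::real)" unfolding uniform_dist_def by simp
    have "graph_entropy E uniform_dist \<le> obj uniform_dist a" unfolding ge_def2
      using bdd_obj[OF Unn, of E] a(1) by (intro cInf_lower) auto
    obtain K where K: "K \<subseteq> UNIV" "clique E K" "card K = w"
      unfolding w_def by (rule clique_number_ex[OF finite_class.finite_UNIV, of E]) auto
    have Kne: "K \<noteq> {}" using K(3) w1 by auto
    have "log 2 (real w) \<le> graph_entropy E (\<chi> i. if i \<in> K then 1 / real (card K) else 0)"
      by (rule ent_clique_lower[OF col w1 K(2,3)])
    also have "\<dots> \<le> graph_entropy E uniform_dist"
      using symm clique_prob[OF Kne] unfolding entropy_symmetric_def by blast
    finally show False using \<open>graph_entropy E uniform_dist \<le> obj uniform_dist a\<close> a(2) by linarith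
  qed
  show ?thesis using part_cond cond_part cond_sym sym_cond by blast
qed

end
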